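(* Let $d\ge1$ and let $C$ be a $(d+1)$-dimensional copula which is $\mathrm{LTD}^1_{d+1}$. Let $(U_1,\ldots,U_d,V)\sim C$, fix $\boldsymbol\alpha=(\alpha_1,\ldots,\alpha_d)\in[0,1)^d$ with $C(\alpha_1,\ldots,\alpha_d,1)<1$, and let $A_{\boldsymbol U}=\{\exists\, i:U_i>\alpha_i\}$. Then $V\le_{\rm st}V\mid A_{\boldsymbol U}$.
   Context: A $(d+1)$-dimensional copula $C$ is $\mathrm{LTD}^1_{d+1}$ if, for $(U_1,\ldots,U_d,V)\sim C$, $P(U_1\le u_1,\ldots,U_d\le u_d\mid V\le v)$ is nonincreasing in $v\in(0,1]$ for all $u_1,\ldots,u_d$ (i.e. $C(u_1,\ldots,u_d,v)/v$ is nonincreasing in $v$). $V\mid A$ denotes a random variable with the conditional distribution of $V$ given $A$. $Z_1\le_{\rm st}Z_2$ means $P(Z_1>x)\le P(Z_2>x)$ for all $x$. *)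

theory Defs
  imports "HOL-Probability.Probability"
begin

text \<open>Coordinates U_1..U_d are indexed by i < d (i.e. 0..d-1).\<close>
definition copula_of ::
  "'a measure \<Rightarrow> nat \<Rightarrow> (nat \<Rightarrow> 'a \<Rightarrow> real) \<Rightarrow> ('a \<Rightarrow> real)
     \<Rightarrow> ((nat \<Rightarrow> real) \<Rightarrow> real \<Rightarrow> real) \<Rightarrow> bool" where
  "copula_of M d U V C \<longleftrightarrow>
     (\<forall>i<d. U i \<in> borel_measurable M \<and> distr M borel (U i) = uniform_measure lborel {0..1}) \<and>
     V \<in> borel_measurable M \<and> distr M borel V = uniform_measure lborel {0..1} \<and>
     (\<forall>u v. (\<forall>i<d. u i \<in> {0..1}) \<and> v \<in> {0..1} \<longrightarrow>
        C u v = measure M {\<omega> \<in> space M. (\<forall>i<d. U i \<omega> \<le> u i) \<and> V \<omega> \<le> v})"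

definition LTD1 :: "nat \<Rightarrow> ((nat \<Rightarrow> real) \<Rightarrow> real \<Rightarrow> real) \<Rightarrow> bool" where
  "LTD1 d C \<longleftrightarrow> (\<forall>u. (\<forall>i<d. u i \<in> {0..1}) \<longrightarrow>
      (\<forall>v1 v2. 0 < v1 \<and> v1 \<le> v2 \<and> v2 \<le> 1 \<longrightarrow> C u v2 / v2 \<le> C u v1 / v1))"

definition st_le :: "real measure \<Rightarrow> real measure \<Rightarrow> bool" where
  "st_le P Q \<longleftrightarrow> (\<forall>x. measure P {x<..} \<le> measure Q {x<..})"

end

theory Submission
  imports Defs
begin

lemma unif_cdf:
  fixes x :: real
  shows "measure (uniform_measure lborel {0..1::real}) {..x} = (if x < 0 then 0 else if x \<le> 1 then x else 1)"
proof -
  have "measure (uniform_measure lborel {0..1::real}) {..x} = measure lborel ({0..1} \<inter> {..x}) / measure lborel {0..1::real}"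
    by (subst measure_uniform_measure) auto
  also have "\<dots> = measure lborel ({0..1} \<inter> {..x})" by simp
  also have "\<dots> = (if x < 0 then 0 else if x \<le> 1 then x else 1)"
  proof (cases "x < 0")
    case True then have "{0..1} \<inter> {..x} = ({}::real set)" by auto
    then show ?thesis using True by simp
  next
    case False
    then show ?thesis
    proof (cases "x \<le> 1")
      case True then have "{0..1} \<inter> {..x} = {0..x}" by auto
      then show ?thesis using True False by simp
    next
      case F2: False then have "{0..1} \<inter> {..x} = {0..1::real}" by auto
      then show ?thesis using F2 False by simp
    qed
  qed
  finally show ?thesis .
qed

theorem lemmaB2:
  fixes M :: "'a measure" and d :: nat
    and U :: "nat \<Rightarrow> 'a \<Rightarrow> real" and V :: "'a \<Rightarrow> real"
    and C :: "(nat \<Rightarrow> real) \<Rightarrow> real \<Rightarrow> real" and \<alpha> :: "nat \<Rightarrow> real"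
  assumes "prob_space M"
    and "d \<ge> 1"
    and "copula_of M d U V C"
    and "LTD1 d C"
    and "\<forall>i<d. \<alpha> i \<in> {0..<1}"
    and "C \<alpha> 1 < 1"
  shows "st_le (distr M borel V)
           (distr (uniform_measure M {\<omega> \<in> space M. \<exists>i<d. U i \<omega> > \<alpha> i}) borel V)"
proof -
  interpret P: prob_space M by fact
  note cop = assms(3)[unfolded copula_of_def]
  have Um: "\<And>i. i < d \<Longrightarrow> U i \<in> borel_measurable M" using cop by auto
  have Vm[measurable]: "V \<in> borel_measurable M" using cop by auto
  have Vd: "distr M borel V = uniform_measure lborel {0..1}" using cop by auto
  have Cdef: "\<And>u v. (\<forall>i<d. u i \<in> {0..1}) \<Longrightarrow> v \<in> {0..1} \<Longrightarrow>
        C u v = measure M {\<omega> \<in> space M. (\<forall>i<d. U i \<omega> \<le> u i) \<and> V \<omega> \<le> v}" using cop by auto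
  have al: "\<forall>i<d. \<alpha> i \<in> {0..1}" using assms(5) by auto
  define A where "A = {\<omega> \<in> space M. \<exists>i<d. U i \<omega> > \<alpha> i}"
  define B where "B = {\<omega> \<in> space M. \<forall>i<d. U i \<omega> \<le> \<alpha> i}"
  have d0: "(0::nat) \<in> {..<d}" using assms(2) by simp
  then have dne: "{..<d} \<noteq> {}" by blast
  have Bset: "B \<in> sets M"
  proof -
    have "B = space M \<inter> (\<Inter>i\<in>{..<d}. {\<omega> \<in> space M. U i \<omega> \<le> \<alpha> i})" unfolding B_def by auto
    also have "\<dots> \<in> sets M"
      by (intro sets.Int sets.top sets.finite_INT) (use dne in \<open>auto intro!: borel_measurable_le Um\<close>)
    finally show ?thesis .
  qed
  have AB: "A = space M - B" unfolding A_def B_def by (auto simp: not_le)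
  have Aset: "A \<in> sets M" using AB Bset by auto
  have Tset: "\<And>x. {\<omega> \<in> space M. V \<omega> \<le> x} \<in> sets M" by measurable
  have PB: "P.prob B = C \<alpha> 1"
  proof -
    have "C \<alpha> 1 = measure M {\<omega> \<in> space M. (\<forall>i<d. U i \<omega> \<le> \<alpha> i) \<and> V \<omega> \<le> 1}"
      using Cdef[OF al] by auto
    also have "\<dots> = measure M B"
    proof (rule P.finite_measure_eq_AE)
      have "AE \<omega> in M. V \<omega> \<le> 1"
      proof -
        have "measure M {\<omega> \<in> space M. V \<omega> \<le> 1} = measure (distr M borel V) {..1}"
          by (subst measure_distr) (auto simp: vimage_def Int_def conj_commute)
        also have "\<dots> = 1" using Vd unif_cdf[of 1] by simp
        finally show ?thesis by (subst P.prob_Collect_eq_1[symmetric]) auto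
      qed
      then show "AE \<omega> in M. (\<omega> \<in> {\<omega> \<in> space M. (\<forall>i<d. U i \<omega> \<le> \<alpha> i) \<and> V \<omega> \<le> 1}) = (\<omega> \<in> B)"
        unfolding B_def by eventually_elim auto
      show "{\<omega> \<in> space M. (\<forall>i<d. U i \<omega> \<le> \<alpha> i) \<and> V \<omega> \<le> 1} \<in> sets M"
      proof -
        have "{\<omega> \<in> space M. (\<forall>i<d. U i \<omega> \<le> \<alpha> i) \<and> V \<omega> \<le> 1} = B \<inter> {\<omega> \<in> space M. V \<omega> \<le> 1}"
          unfolding B_def by auto
        then show ?thesis using Bset Tset by auto
      qed
    qed (use Bset in auto)
    finally show ?thesis by simp
  qed
  have PA: "P.prob A = 1 - C \<alpha> 1" using AB P.prob_compl[OF Bset] PB by simp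
  have PApos: "P.prob A > 0" using PA assms(6) by simp
  show ?thesis unfolding st_le_def A_def[symmetric]
  proof
    fix x :: real
    define S where "S = {\<omega> \<in> space M. x < V \<omega>}"
    define T where "T = {\<omega> \<in> space M. V \<omega> \<le> x}"
    have Sset: "S \<in> sets M" unfolding S_def by measurable
    have TS: "T = space M - S" unfolding S_def T_def by auto
    define F where "F = P.prob T"
    define G where "G = P.prob (T \<inter> B)"
    have lhs: "measure (distr M borel V) {x<..} = P.prob S"
      by (subst measure_distr) (auto simp: S_def vimage_def Int_def conj_commute)
    have rhs: "measure (distr (uniform_measure M A) borel V) {x<..} = P.prob (A \<inter> S) / P.prob A"
    proof -
      have "measure (distr (uniform_measure M A) borel V) {x<..} = measure (uniform_measure M A) S"
        by (subst measure_distr) (auto simp: S_def vimage_def Int_def conj_commute)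
      also have "\<dots> = P.prob (A \<inter> S) / P.prob A"
        using PApos Sset by (subst measure_uniform_measure) (auto simp: P.emeasure_eq_measure)
      finally show ?thesis .
    qed
    have FS: "P.prob S = 1 - F" unfolding F_def TS using P.prob_compl[OF Sset] by simp
    have AS: "P.prob (A \<inter> S) = P.prob A - F + G"
    proof -
      have Tset': "T \<in> sets M" using Tset T_def by auto
      have e1: "A - S = A \<inter> T" using TS Aset sets.sets_into_space by blast
      have e2: "T - B = A \<inter> T" using AB T_def by blast
      have "P.prob A = P.prob (A \<inter> S) + P.prob (A \<inter> T)"
        using P.finite_measure_Diff'[OF Aset Sset] e1 by simp
      moreover have "F = P.prob (A \<inter> T) + G"
        unfolding F_def G_def using P.finite_measure_Diff'[OF Tset' Bset] e2 by simp
      ultimately show ?thesis by simp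
    qed
    have key: "F * C \<alpha> 1 \<le> G"
    proof -
      have Fx: "F = (if x < 0 then 0 else if x \<le> 1 then x else 1)"
      proof -
        have "F = measure (distr M borel V) {..x}"
          unfolding F_def T_def by (subst measure_distr) (auto simp: vimage_def Int_def conj_commute)
        then show ?thesis using Vd unif_cdf by simp
      qed
      have Gx: "x \<in> {0..1} \<Longrightarrow> G = C \<alpha> x"
        unfolding G_def T_def B_def using Cdef[OF al, of x]
        by (auto intro!: arg_cong[where f="measure M"])
      have G0: "G \<ge> 0" unfolding G_def by simp
      have C1: "C \<alpha> 1 \<ge> 0" using PB by (metis measure_nonneg)
      show ?thesis
      proof (cases "x < 0")
        case True then show ?thesis using Fx G0 by simp
      next
        case False
        show ?thesis
        proof (cases "x \<le> 1")
          case True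
          show ?thesis
          proof (cases "x = 0")
            case True then show ?thesis using Fx G0 by simp
          next
            case x0: False
            have "C \<alpha> 1 / 1 \<le> C \<alpha> x / x"
            proof -
              have "\<forall>v1 v2. 0 < v1 \<and> v1 \<le> v2 \<and> v2 \<le> 1 \<longrightarrow> C \<alpha> v2 / v2 \<le> C \<alpha> v1 / v1"
                using assms(4)[unfolded LTD1_def] al by blast
              moreover have "0 < x \<and> x \<le> 1 \<and> (1::real) \<le> 1" using False True x0 by auto
              ultimately show ?thesis by blast
            qed
            then have "x * C \<alpha> 1 \<le> C \<alpha> x" using False x0
              by (simp add: field_simps)
            then show ?thesis using Fx Gx False True by simp
          qed
        next
          case x1: False
          have "G \<ge> P.prob (T \<inter> B \<inter> {\<omega>\<in>space M. V \<omega> \<le> 1})"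
            unfolding G_def
            by (rule P.finite_measure_mono) (use Bset Tset T_def in auto)
          also have "P.prob (T \<inter> B \<inter> {\<omega>\<in>space M. V \<omega> \<le> 1}) = C \<alpha> 1"
            using Cdef[OF al, of 1] x1 unfolding T_def B_def
            by (auto intro!: arg_cong[where f="measure M"])
          finally show ?thesis using Fx x1 False by simp
        qed
      qed
    qed
    have "P.prob S * P.prob A \<le> P.prob (A \<inter> S)"
    proof -
      have "P.prob S * P.prob A = (1 - F) * (1 - C \<alpha> 1)" using FS PA by simp
      also have "\<dots> = 1 - F - C \<alpha> 1 + F * C \<alpha> 1" by (simp add: algebra_simps)
      also have "\<dots> \<le> 1 - F - C \<alpha> 1 + G" using key by simp
      also have "\<dots> = P.prob (A \<inter> S)" using AS PA by simp
      finally show ?thesis .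
    qed
    then show "measure (distr M borel V) {x<..} \<le> measure (distr (uniform_measure M A) borel V) {x<..}"
      unfolding lhs rhs using PApos by (simp add: field_simps)
  qed
qed

end
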